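(* There exist no positive integers $a,b,c$ with $1\le a\le b$ and $c\ge 6$ such that every nonnegative integer can be written as $ax^2+by^2+c(z^2+zw+w^2)$ with $x,y,z,w\in\mathbb{Z}$. *)

theory Defs
  imports Main
begin

end

theory Submission
  imports Defs
begin

lemma sq_cases: "(x::int)^2 = 0 \<or> x^2 = 1 \<or> x^2 = 4 \<or> x^2 \<ge> 9"
proof (cases "\<bar>x\<bar> \<ge> 3")
  case True
  have "(3::int)^2 \<le> \<bar>x\<bar>^2" by (rule power_mono) (use True in auto)
  then show ?thesis by simp
next
  case False
  then have "x = 0 \<or> x = 1 \<or> x = -1 \<or> x = 2 \<or> x = -2" by auto
  then show ?thesis by auto
qed

lemma q_nonneg: "(z::int)^2 + z*w + w^2 \<ge> 0"
proof -
  define q where "q = (z::int)^2 + z*w + w^2"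
  have "4 * q = (2*z+w)^2 + 3*w^2" unfolding q_def by (simp add: power2_eq_square algebra_simps)
  moreover have "(2*z+w)^2 + 3*w^2 \<ge> 0" by simp
  ultimately have "0 \<le> 4 * q" by linarith
  then show ?thesis unfolding q_def[symmetric] by simp
qed

lemma red:
  fixes a b c n :: int
  assumes "1 \<le> a" "a \<le> b" "c \<ge> 6" "0 \<le> n" "n < 6"
    and "\<exists>x y z w :: int. n = a * x^2 + b * y^2 + c * (z^2 + z * w + w^2)"
  shows "\<exists>X Y. n = a * X + b * Y \<and> (X = 0 \<or> X = 1 \<or> X = 4 \<or> X \<ge> 9) \<and> (Y = 0 \<or> Y = 1 \<or> Y = 4 \<or> Y \<ge> 9)"
proof -
  obtain x y z w where e: "n = a * x^2 + b * y^2 + c * (z^2 + z * w + w^2)" using assms(6) by blast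
  define q where "q = z^2 + z * w + w^2"
  have q0: "q \<ge> 0" unfolding q_def by (rule q_nonneg)
  have ax: "a * x^2 \<ge> 0" using assms(1) by simp
  have bY: "b * y^2 \<ge> 0" using assms(1,2) by simp
  have "q = 0"
  proof (rule ccontr)
    assume "q \<noteq> 0"
    then have "q \<ge> 1" using q0 by simp
    then have "c * q \<ge> 6 * 1" using assms(3) by (intro mult_mono) auto
    then show False using e ax bY assms(5) unfolding q_def by linarith
  qed
  then have "n = a * x^2 + b * y^2" using e unfolding q_def by simp
  then show ?thesis using sq_cases[of x] sq_cases[of y] by blast
qed

theorem theorem7p2:
  shows "\<not> (\<exists>a b c :: int. 1 \<le> a \<and> a \<le> b \<and> c \<ge> 6 \<and>
           (\<forall>n::int. n \<ge> 0 \<longrightarrow>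
              (\<exists>x y z w :: int. n = a * x^2 + b * y^2 + c * (z^2 + z * w + w^2))))"
proof
  assume "\<exists>a b c :: int. 1 \<le> a \<and> a \<le> b \<and> c \<ge> 6 \<and>
           (\<forall>n::int. n \<ge> 0 \<longrightarrow>
              (\<exists>x y z w :: int. n = a * x^2 + b * y^2 + c * (z^2 + z * w + w^2)))"
  then obtain a b c :: int where h: "1 \<le> a" "a \<le> b" "c \<ge> 6"
    and all: "\<And>n. n \<ge> 0 \<Longrightarrow> \<exists>x y z w :: int. n = a * x^2 + b * y^2 + c * (z^2 + z * w + w^2)"
    by blast
  have R: "\<And>n. 0 \<le> n \<Longrightarrow> n < 6 \<Longrightarrow> \<exists>X Y. n = a * X + b * Y \<and> (X = 0 \<or> X = 1 \<or> X = 4 \<or> X \<ge> 9) \<and> (Y = 0 \<or> Y = 1 \<or> Y = 4 \<or> Y \<ge> 9)"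
    using red[OF h] all by blast
  have a1: "a = 1"
  proof -
    obtain X Y where e: "1 = a * X + b * Y" "X = 0 \<or> X = 1 \<or> X = 4 \<or> X \<ge> 9" "Y = 0 \<or> Y = 1 \<or> Y = 4 \<or> Y \<ge> 9"
      using R[of 1] by auto
    have "b * Y \<ge> a * Y" using h e(3) by (intro mult_right_mono) auto
    then have "1 \<ge> a * (X + Y)" using e(1) by (simp add: distrib_left)
    moreover have "X + Y \<ge> 1" using e h by auto
    moreover have "a * (X + Y) \<ge> a * 1" using h \<open>X + Y \<ge> 1\<close> by (intro mult_left_mono) auto
    ultimately show ?thesis using h by linarith
  qed
  have b2: "b \<le> 2"
  proof -
    obtain X Y where e: "2 = a * X + b * Y" "X = 0 \<or> X = 1 \<or> X = 4 \<or> X \<ge> 9" "Y = 0 \<or> Y = 1 \<or> Y = 4 \<or> Y \<ge> 9"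
      using R[of 2] by auto
    have "Y \<noteq> 0" using e a1 by auto
    then have "Y \<ge> 1" using e by auto
    then have "b * Y \<ge> b * 1" using h by (intro mult_left_mono) auto
    then show ?thesis using e a1 by auto
  qed
  show False
  proof (cases "b = 1")
    case True
    obtain X Y where e: "3 = a * X + b * Y" "X = 0 \<or> X = 1 \<or> X = 4 \<or> X \<ge> 9" "Y = 0 \<or> Y = 1 \<or> Y = 4 \<or> Y \<ge> 9"
      using R[of 3] by auto
    then show False using True a1 by auto
  next
    case False
    then have "b = 2" using b2 h a1 by auto
    obtain X Y where e: "5 = a * X + b * Y" "X = 0 \<or> X = 1 \<or> X = 4 \<or> X \<ge> 9" "Y = 0 \<or> Y = 1 \<or> Y = 4 \<or> Y \<ge> 9"
      using R[of 5] by auto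
    then show False using \<open>b = 2\<close> a1 by auto
  qed
qed

end
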